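(* A quantum channel $\mathcal P$ on $S$ is activity breaking (i.e. $\mathcal P(\rho)\in\mathsf P(S)$ for every $\rho\in\mathsf{St}(S)$) if and only if there is a POVM $(P_j)_{j=1}^d$ (with $P_j\ge0$, $\sum_jP_j=I$) such that $\mathcal P(\rho)=\sum_{j=1}^d\mathrm{Tr}[P_j\rho]\,\tau_j$ for all $\rho$.
   Context: $S$ is a $d$-dimensional quantum system with non-degenerate Hamiltonian $H=\sum_i E_i|i\rangle\langle i|$, $E_1<\dots<E_d$. $\mathsf{St}(S)$ is the set of density matrices; $\mathsf P(S)$ is the set of passive states, i.e. states $\sum_i p_i|i\rangle\langle i|$ with $p_1\ge\dots\ge p_d$. For $j=1,\dots,d$, $\tau_j=\frac1j\sum_{i=1}^j|i\rangle\langle i|$. *)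

theory Defs
  imports Complex_Main
begin

text \<open>Operators on the d-dimensional system are represented as complex matrices
  nat => nat => complex supported on indices 0..<d, written in the
  energy eigenbasis: index a (0-based) corresponds to the eigenvector |a+1> with
  energy E_(a+1), so that E_1 < ... < E_d is the index order.\<close>

type_synonym cmat = "nat \<Rightarrow> nat \<Rightarrow> complex"

definition is_mat :: "nat \<Rightarrow> cmat \<Rightarrow> bool" where
  "is_mat d A \<longleftrightarrow> (\<forall>i j. (d \<le> i \<or> d \<le> j) \<longrightarrow> A i j = 0)"

definition mtrace :: "nat \<Rightarrow> cmat \<Rightarrow> complex" where
  "mtrace d A = (\<Sum>i<d. A i i)"

definition mmult :: "nat \<Rightarrow> cmat \<Rightarrow> cmat \<Rightarrow> cmat" where
  "mmult d A B = (\<lambda>i j. if i < d \<and> j < d then (\<Sum>k<d. A i k * B k j) else 0)"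

definition idm :: "nat \<Rightarrow> cmat" where
  "idm d = (\<lambda>i j. if i = j \<and> i < d then 1 else 0)"

definition psd :: "nat \<Rightarrow> cmat \<Rightarrow> bool" where
  "psd d A \<longleftrightarrow> is_mat d A \<and>
     (\<forall>v :: nat \<Rightarrow> complex. let q = (\<Sum>i<d. \<Sum>j<d. cnj (v i) * A i j * v j)
        in Im q = 0 \<and> Re q \<ge> 0)"

definition density :: "nat \<Rightarrow> cmat \<Rightarrow> bool" where
  "density d \<rho> \<longleftrightarrow> psd d \<rho> \<and> mtrace d \<rho> = 1"

definition passive_state :: "nat \<Rightarrow> cmat \<Rightarrow> bool" where
  "passive_state d \<rho> \<longleftrightarrow> density d \<rho> \<and>
     (\<exists>p :: nat \<Rightarrow> real. \<rho> = (\<lambda>i j. if i = j \<and> i < d then complex_of_real (p i) else 0)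
        \<and> (\<forall>i j. i \<le> j \<longrightarrow> j < d \<longrightarrow> p j \<le> p i))"

text \<open>tau_j = (1/j) sum_{i=1}^j |i><i|, for j = 1..d (basis |i> is index i-1).\<close>
definition tau :: "nat \<Rightarrow> cmat" where
  "tau j = (\<lambda>a b. if a = b \<and> a < j then 1 / of_nat j else 0)"

text \<open>Ampliation id_n \<otimes> Phi acting on an (n*d) x (n*d) block matrix with d x d blocks.\<close>
definition ampl :: "nat \<Rightarrow> nat \<Rightarrow> (cmat \<Rightarrow> cmat) \<Rightarrow> cmat \<Rightarrow> cmat" where
  "ampl n d \<Phi> X = (\<lambda>p q. if p < n * d \<and> q < n * d then
      \<Phi> (\<lambda>i j. if i < d \<and> j < d then X ((p div d) * d + i) ((q div d) * d + j) else 0)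
        (p mod d) (q mod d)
    else 0)"

definition channel :: "nat \<Rightarrow> (cmat \<Rightarrow> cmat) \<Rightarrow> bool" where
  "channel d \<Phi> \<longleftrightarrow>
     (\<forall>A. is_mat d A \<longrightarrow> is_mat d (\<Phi> A)) \<and>
     (\<forall>A B. is_mat d A \<longrightarrow> is_mat d B \<longrightarrow>
        \<Phi> (\<lambda>i j. A i j + B i j) = (\<lambda>i j. \<Phi> A i j + \<Phi> B i j)) \<and>
     (\<forall>c A. is_mat d A \<longrightarrow> \<Phi> (\<lambda>i j. c * A i j) = (\<lambda>i j. c * \<Phi> A i j)) \<and>
     (\<forall>A. is_mat d A \<longrightarrow> mtrace d (\<Phi> A) = mtrace d A) \<and>
     (\<forall>n X. psd (n * d) X \<longrightarrow> psd (n * d) (ampl n d \<Phi> X))"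

definition activity_breaking :: "nat \<Rightarrow> (cmat \<Rightarrow> cmat) \<Rightarrow> bool" where
  "activity_breaking d \<Phi> \<longleftrightarrow> (\<forall>\<rho>. density d \<rho> \<longrightarrow> passive_state d (\<Phi> \<rho>))"

definition povm :: "nat \<Rightarrow> (nat \<Rightarrow> cmat) \<Rightarrow> bool" where
  "povm d P \<longleftrightarrow> (\<forall>j\<in>{1..d}. psd d (P j)) \<and>
     (\<forall>a b. (\<Sum>j=1..d. P j a b) = idm d a b)"

end

theory Submission
  imports Defs
begin


definition qf :: "nat \<Rightarrow> cmat \<Rightarrow> (nat \<Rightarrow> complex) \<Rightarrow> complex" where
  "qf d A v = (\<Sum>i<d. \<Sum>j<d. cnj (v i) * A i j * v j)"

definition nn :: "complex \<Rightarrow> bool" where "nn z \<longleftrightarrow> Im z = 0 \<and> 0 \<le> Re z"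

lemma psd_iff: "psd d A \<longleftrightarrow> is_mat d A \<and> (\<forall>v. nn (qf d A v))"
  unfolding psd_def qf_def nn_def Let_def by simp

lemma ifm: "(if P then a else 0) * (b::complex) = (if P then a*b else 0)" "b * (if P then a else 0) = (if P then b*a else 0)" by auto

lemma sum_if_const: "(\<Sum>j\<in>S. if P then f j else (0::complex)) = (if P then \<Sum>j\<in>S. f j else 0)" by auto

lemma qf_add:
  assumes "k < d"
  shows "qf d A (\<lambda>i. v i + (if i = k then t else 0)) =
    qf d A v + cnj t * (\<Sum>j<d. A k j * v j) + t * (\<Sum>i<d. cnj (v i) * A i k) + cnj t * t * A k k"
proof -
  have "qf d A (\<lambda>i. v i + (if i = k then t else 0)) =
     (\<Sum>i<d. (\<Sum>j<d. cnj (v i) * A i j * v j) + (\<Sum>j<d. cnj (v i) * A i j * (if j = k then t else 0))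
        + (\<Sum>j<d. (if i = k then cnj t else 0) * A i j * v j) + (\<Sum>j<d. (if i = k then cnj t else 0) * A i j * (if j = k then t else 0)))"
    unfolding qf_def sum.distrib[symmetric] by (intro sum.cong refl) (auto simp: algebra_simps)
  also have "\<dots> = qf d A v + (\<Sum>i<d. cnj (v i) * A i k * t) + (\<Sum>i<d. (if i = k then cnj t * (\<Sum>j<d. A k j * v j) else 0))
      + (\<Sum>i<d. (if i = k then cnj t * A k k * t else 0))"
    unfolding qf_def sum.distrib
    using assms by (simp add: sum_distrib_left ifm mult.assoc sum_if_const cong: if_cong)
  also have "\<dots> = qf d A v + cnj t * (\<Sum>j<d. A k j * v j) + t * (\<Sum>i<d. cnj (v i) * A i k) + cnj t * t * A k k"
    using assms by (simp add: sum_distrib_left algebra_simps)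
  finally show ?thesis .
qed

lemma qf_unit:
  assumes "k < d" shows "qf d A (\<lambda>i. if i = k then t else 0) = cnj t * t * A k k"
  using qf_add[OF assms, of A "\<lambda>_. 0" t] by (simp add: qf_def)

lemma qf_two:
  assumes "i < d" "j < d" "i \<noteq> j"
  shows "qf d A (\<lambda>l. (if l = j then t else 0) + (if l = i then s else 0)) =
     cnj t * t * A j j + cnj s * (A i j * t) + s * (cnj t * A j i) + cnj s * s * A i i"
proof -
  have "qf d A (\<lambda>l. (if l = j then t else 0) + (if l = i then s else 0)) =
     qf d A (\<lambda>l. if l = j then t else 0) + cnj s * (\<Sum>l<d. A i l * (if l = j then t else 0))
     + s * (\<Sum>l<d. cnj (if l = j then t else 0) * A l i) + cnj s * s * A i i"
    by (rule qf_add[OF assms(1)])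
  also have "\<dots> = cnj t * t * A j j + cnj s * (A i j * t) + s * (cnj t * A j i) + cnj s * s * A i i"
    using assms by (simp add: qf_unit ifm if_distrib[of cnj] cong: if_cong)
  finally show ?thesis .
qed

lemma diag_nn: assumes "psd d A" "k < d" shows "nn (A k k)"
  using assms qf_unit[OF assms(2), of A 1] by (simp add: psd_iff) metis

lemma herm: assumes "psd d A" "i < d" "j < d" shows "A j i = cnj (A i j)"
proof (cases "i = j")
  case True
  then show ?thesis using diag_nn[OF assms(1,2)] by (simp add: nn_def complex_eq_iff)
next
  case False
  have ni: "nn (A i i)" and nj: "nn (A j j)" using diag_nn assms by auto
  have q1: "nn (qf d A (\<lambda>l. (if l = j then 1 else 0) + (if l = i then 1 else 0)))"
    using assms by (simp add: psd_iff)
  have q2: "nn (qf d A (\<lambda>l. (if l = j then \<i> else 0) + (if l = i then 1 else 0)))"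
    using assms by (simp add: psd_iff)
  from q1 ni nj have a: "Im (A i j) + Im (A j i) = 0"
    by (simp add: qf_two[OF assms(2,3) False] nn_def)
  from q2 ni nj have b: "Re (A i j) - Re (A j i) = 0"
    by (simp add: qf_two[OF assms(2,3) False] nn_def)
  show ?thesis using a b by (simp add: complex_eq_iff)
qed

lemma zero_row: assumes "psd d A" "k < d" "b < d" "A k k = 0" shows "A k b = 0"
proof (rule ccontr)
  assume z: "A k b \<noteq> 0"
  then have kb: "k \<noteq> b" using assms by auto
  define z where "z = A k b"
  define n where "n = (Re z)^2 + (Im z)^2"
  have npos: "n > 0" using z unfolding n_def z_def
    by (simp add: complex_eq_iff sum_power2_gt_zero_iff)
  define r where "r = (Re (A b b) + 1) / (2 * n)"
  define s where "s = - (complex_of_real r) * z"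
  have bz: "A b k = cnj z" using herm[OF assms(1,2,3)] z_def by simp
  have q: "nn (qf d A (\<lambda>l. (if l = b then 1 else 0) + (if l = k then s else 0)))"
    using assms by (simp add: psd_iff)
  have "Re (qf d A (\<lambda>l. (if l = b then 1 else 0) + (if l = k then s else 0))) = Re (A b b) - 2 * r * n"
    unfolding qf_two[OF assms(2,3) kb] using assms(4) bz
    by (simp add: s_def z_def[symmetric] n_def power2_eq_square algebra_simps)
  also have "\<dots> = -1" using npos by (simp add: r_def field_simps)
  finally show False using q by (simp add: nn_def)
qed

definition tt :: "nat \<Rightarrow> cmat \<Rightarrow> cmat \<Rightarrow> complex" where
  "tt d P R = (\<Sum>a<d. \<Sum>b<d. P a b * R b a)"

lemma nn_add: "nn x \<Longrightarrow> nn y \<Longrightarrow> nn (x + y)" by (simp add: nn_def)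

lemma nn_div: "nn q \<Longrightarrow> cnj r = r \<Longrightarrow> Re r > 0 \<Longrightarrow> nn (q / r)"
  by (simp add: nn_def Re_divide Im_divide complex_eq_iff)

lemma trace_nn_aux:
  assumes P: "psd d P"
  shows "\<forall>R. psd d R \<and> (\<forall>a b. R a b \<noteq> 0 \<longrightarrow> d - n \<le> a \<and> d - n \<le> b) \<longrightarrow> nn (tt d P R)"
proof (induction n)
  case 0
  show ?case
  proof (intro allI impI)
    fix R assume "psd d R \<and> (\<forall>a b. R a b \<noteq> 0 \<longrightarrow> d - 0 \<le> a \<and> d - 0 \<le> b)"
    then have "\<forall>a<d. \<forall>b<d. R b a = 0" by force
    then show "nn (tt d P R)" by (simp add: tt_def nn_def)
  qed
next
  case (Suc n)
  show ?case
  proof (intro allI impI)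
    fix R assume RA: "psd d R \<and> (\<forall>a b. R a b \<noteq> 0 \<longrightarrow> d - Suc n \<le> a \<and> d - Suc n \<le> b)"
    then have R: "psd d R" and supp: "\<And>a b. R a b \<noteq> 0 \<Longrightarrow> d - Suc n \<le> a \<and> d - Suc n \<le> b" by auto
    have Rm: "is_mat d R" using R by (simp add: psd_iff)
    show "nn (tt d P R)"
    proof (cases "d \<le> n")
      case True
      then show ?thesis using Suc.IH RA by auto
    next
      case False
      define k where "k = d - Suc n"
      have kd: "k < d" and k1: "Suc k = d - n" using False by (auto simp: k_def)
      show ?thesis
      proof (cases "R k k = 0")
        case True
        have row: "R k b = 0" for b
          using zero_row[OF R kd _ True, of b] Rm by (cases "b < d") (auto simp: is_mat_def)
        have col: "R b k = 0" for b
          using herm[OF R _ kd, of b] row[of b] Rm by (cases "b < d") (auto simp: is_mat_def)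
        have "\<forall>a b. R a b \<noteq> 0 \<longrightarrow> d - n \<le> a \<and> d - n \<le> b"
        proof (intro allI impI)
          fix a b assume "R a b \<noteq> 0"
          with supp[OF this] row col show "d - n \<le> a \<and> d - n \<le> b"
            unfolding k1[symmetric] k_def[symmetric] by (metis Suc_leI le_neq_implies_less)
        qed
        then show ?thesis using Suc.IH R by auto
      next
        case False
        define r where "r = R k k"
        have rnn: "nn r" using diag_nn[OF R kd] r_def by simp
        have rpos: "Re r > 0" using rnn False unfolding r_def nn_def by (simp add: complex_eq_iff)
        have cr: "cnj r = r" using rnn by (simp add: nn_def complex_eq_iff)
        define R' where "R' = (\<lambda>a b. R a b - R a k * R k b / r)"
        have R'm: "is_mat d R'" using Rm unfolding is_mat_def R'_def by auto
        have qR': "qf d R' v = qf d R (\<lambda>i. v i + (if i = k then - (\<Sum>j<d. R k j * v j) / r else 0))" for v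
        proof -
          define al where "al = (\<Sum>j<d. R k j * v j)"
          define be where "be = (\<Sum>i<d. cnj (v i) * R i k)"
          have "qf d R' v = qf d R v - (\<Sum>i<d. \<Sum>j<d. (cnj (v i) * R i k) * (R k j * v j)) / r"
            unfolding qf_def R'_def by (simp add: sum_subtractf sum_divide_distrib algebra_simps)
          also have "\<dots> = qf d R v - be * al / r"
            unfolding al_def be_def by (simp add: sum_product)
          also have "\<dots> = qf d R (\<lambda>i. v i + (if i = k then - al / r else 0))"
            unfolding qf_add[OF kd] al_def[symmetric] be_def[symmetric] r_def[symmetric]
            using rpos cr by (subgoal_tac "r \<noteq> 0") (auto simp: field_simps)
          finally show ?thesis unfolding al_def .
        qed
        have R'p: "psd d R'" using R R'm qR' by (simp add: psd_iff)
        have R's: "\<forall>a b. R' a b \<noteq> 0 \<longrightarrow> d - n \<le> a \<and> d - n \<le> b"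
        proof (intro allI impI)
          fix a b assume ne: "R' a b \<noteq> 0"
          have "a \<noteq> k" using ne False unfolding R'_def r_def by auto
          moreover have "b \<noteq> k" using ne False unfolding R'_def r_def by auto
          moreover have "k \<le> a"
          proof (rule ccontr)
            assume "\<not> k \<le> a"
            then have "R a b = 0" "R a k = 0" using supp unfolding k_def by (meson not_le)+
            then show False using ne unfolding R'_def by simp
          qed
          moreover have "k \<le> b"
          proof (rule ccontr)
            assume "\<not> k \<le> b"
            then have "R a b = 0" "R k b = 0" using supp unfolding k_def by (meson not_le)+
            then show False using ne unfolding R'_def by simp
          qed
          ultimately show "d - n \<le> a \<and> d - n \<le> b" using k1 by auto
        qed
        have IH: "nn (tt d P R')" using Suc.IH R'p R's by auto
        define u where "u = (\<lambda>b. R b k)"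
        have "tt d P R = tt d P R' + (\<Sum>a<d. \<Sum>b<d. cnj (u a) * P a b * u b) / r"
          unfolding tt_def R'_def u_def using herm[OF R _ kd]
          by (simp add: sum_subtractf sum_divide_distrib algebra_simps)
        moreover have "nn ((\<Sum>a<d. \<Sum>b<d. cnj (u a) * P a b * u b) / r)"
          using P rpos cr unfolding psd_iff qf_def[symmetric]
          by (intro nn_div) (auto simp: u_def)
        ultimately show ?thesis using IH nn_add by simp
      qed
    qed
  qed
qed



lemma trace_nn: "psd d P \<Longrightarrow> psd d R \<Longrightarrow> nn (mtrace d (mmult d P R))"
proof -
  assume P: "psd d P" and R: "psd d R"
  have "nn (tt d P R)" using trace_nn_aux[OF P, of d] R by auto
  then show ?thesis by (simp add: tt_def mtrace_def mmult_def)
qed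

definition emat :: "nat \<Rightarrow> nat \<Rightarrow> cmat" where
  "emat b a = (\<lambda>x y. if x = b \<and> y = a then 1 else 0)"

lemma ch_zero: "channel d \<Phi> \<Longrightarrow> \<Phi> (\<lambda>x y. 0) = (\<lambda>x y. 0)"
proof -
  assume c: "channel d \<Phi>"
  have "is_mat d (\<lambda>x y. 0)" by (simp add: is_mat_def)
  then have "\<Phi> (\<lambda>i j. 0 * (\<lambda>x y. 0) i j) = (\<lambda>i j. 0 * \<Phi> (\<lambda>x y. 0) i j)"
    using c unfolding channel_def by blast
  then show ?thesis by simp
qed

lemma lin_sum:
  assumes c: "channel d \<Phi>" and fin: "finite S"
  shows "(\<forall>i\<in>S. is_mat d (M i)) \<Longrightarrow> \<Phi> (\<lambda>x y. \<Sum>i\<in>S. M i x y) = (\<lambda>x y. \<Sum>i\<in>S. \<Phi> (M i) x y)"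
  using fin
proof (induction S rule: finite_induct)
  case empty
  then show ?case using ch_zero[OF c] by simp
next
  case (insert i S)
  have m1: "is_mat d (M i)" using insert by auto
  have m2: "is_mat d (\<lambda>x y. \<Sum>i\<in>S. M i x y)" using insert unfolding is_mat_def by auto
  have "\<Phi> (\<lambda>x y. \<Sum>i\<in>insert i S. M i x y) = \<Phi> (\<lambda>x y. M i x y + (\<lambda>x y. \<Sum>i\<in>S. M i x y) x y)"
    using insert by simp
  also have "\<dots> = (\<lambda>x y. \<Phi> (M i) x y + \<Phi> (\<lambda>x y. \<Sum>i\<in>S. M i x y) x y)"
    using c m1 m2 unfolding channel_def by blast
  finally show ?case using insert by simp
qed

lemma mat_expand: "is_mat d A \<Longrightarrow> A = (\<lambda>x y. \<Sum>a<d. \<Sum>b<d. A b a * emat b a x y)"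
proof (rule ext)+
  fix x y assume m: "is_mat d A"
  have i: "(\<Sum>b<d. A b a * emat b a x y) = (if y = a \<and> x < d then A x a else 0)" for a
    by (cases "y = a") (auto simp: emat_def ifm cong: if_cong)
  have "(\<Sum>a<d. \<Sum>b<d. A b a * emat b a x y) = (\<Sum>a<d. if y = a then (if x < d then A x a else 0) else 0)"
    unfolding i by (intro sum.cong) auto
  also have "\<dots> = A x y" using m by (auto simp: is_mat_def)
  finally show "A x y = (\<Sum>a<d. \<Sum>b<d. A b a * emat b a x y)" by simp
qed

lemma emat_mat: "b < d \<Longrightarrow> a < d \<Longrightarrow> is_mat d (emat b a)"
  by (auto simp: is_mat_def emat_def)

lemma phi_expand:
  assumes c: "channel d \<Phi>" and m: "is_mat d A"
  shows "\<Phi> A x y = (\<Sum>a<d. \<Sum>b<d. A b a * \<Phi> (emat b a) x y)"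
proof -
  define M where "M = (\<lambda>p::nat\<times>nat. \<lambda>x y. A (snd p) (fst p) * emat (snd p) (fst p) x y)"
  have "A = (\<lambda>x y. \<Sum>p\<in>{..<d}\<times>{..<d}. M p x y)"
    apply (subst mat_expand[OF m])
    by (simp add: M_def sum.cartesian_product case_prod_beta)
  then have "\<Phi> A = (\<lambda>x y. \<Sum>p\<in>{..<d}\<times>{..<d}. \<Phi> (M p) x y)"
    using lin_sum[OF c, of "{..<d}\<times>{..<d}" M] emat_mat by (auto simp: M_def is_mat_def emat_def)
  also have "\<dots> = (\<lambda>x y. \<Sum>p\<in>{..<d}\<times>{..<d}. A (snd p) (fst p) * \<Phi> (emat (snd p) (fst p)) x y)"
  proof -
    have "\<Phi> (M p) = (\<lambda>x y. A (snd p) (fst p) * \<Phi> (emat (snd p) (fst p)) x y)" if "p \<in> {..<d}\<times>{..<d}" for p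
      using c emat_mat[of "snd p" d "fst p"] that unfolding channel_def M_def by auto
    then show ?thesis by (intro ext sum.cong) auto
  qed
  finally show ?thesis by (simp add: sum.cartesian_product case_prod_beta)
qed

definition cc :: "(cmat \<Rightarrow> cmat) \<Rightarrow> nat \<Rightarrow> cmat \<Rightarrow> complex" where
  "cc \<Phi> j A = of_nat j * (\<Phi> A (j - 1) (j - 1) - \<Phi> A j j)"

lemma cc_lin:
  assumes c: "channel d \<Phi>" and m: "is_mat d A"
  shows "cc \<Phi> j A = (\<Sum>a<d. \<Sum>b<d. A b a * cc \<Phi> j (emat b a))"
  unfolding cc_def phi_expand[OF c m]
  by (simp add: sum_subtractf[symmetric] sum_distrib_left algebra_simps)

definition PP :: "nat \<Rightarrow> (cmat \<Rightarrow> cmat) \<Rightarrow> nat \<Rightarrow> cmat" where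
  "PP d \<Phi> j = (\<lambda>a b. if a < d \<and> b < d then cc \<Phi> j (emat b a) else 0)"

lemma mtrace_PP:
  assumes c: "channel d \<Phi>" and m: "is_mat d A"
  shows "mtrace d (mmult d (PP d \<Phi> j) A) = cc \<Phi> j A"
  unfolding cc_lin[OF c m] mtrace_def mmult_def PP_def
  by (simp add: mult.commute)

lemma tel1: "(a::nat) < d \<Longrightarrow> (\<Sum>j=1..d. (D (j - 1) - D j) * (if a < j then 1 else 0)) = D a - (D d :: complex)"
proof (induction d)
  case 0 then show ?case by simp
next
  case (Suc n)
  show ?case
  proof (cases "a < n")
    case True
    then show ?thesis using Suc by (simp add: sum.cl_ivl_Suc)
  next
    case False
    then have an: "a = n" using Suc by simp
    have "(\<Sum>j=1..n. (D (j - 1) - D j) * (if a < j then 1 else 0)) = 0"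
      using an by (intro sum.neutral) auto
    then show ?thesis using an by (simp add: sum.cl_ivl_Suc)
  qed
qed

lemma tel2: "(\<Sum>j=1..n. of_nat j * (D (j - 1) - D j)) = (\<Sum>i<n. D i) - of_nat n * (D n :: complex)"
  by (induction n) (auto simp: algebra_simps)



lemma ampl1:
  assumes c: "channel d \<Phi>" and m: "is_mat d X"
  shows "ampl 1 d \<Phi> X = \<Phi> X"
proof (intro ext)
  fix p q
  have X: "(\<lambda>i j. if i < d \<and> j < d then X i j else 0) = X"
    using m unfolding is_mat_def by (intro ext) (force simp: not_less)
  have "is_mat d (\<Phi> X)" using c m by (simp add: channel_def)
  then show "ampl 1 d \<Phi> X p q = \<Phi> X p q"
  proof (cases "p < d \<and> q < d")
    case True
    then have pd: "p < d" and qd: "q < d" by auto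
    show ?thesis unfolding ampl_def div_less[OF pd] div_less[OF qd] mod_less[OF pd] mod_less[OF qd]
      by (simp only: mult_1 pd qd mult_zero_left add_0_left X simp_thms if_True)
  next
    case False
    then show ?thesis unfolding ampl_def using \<open>is_mat d (\<Phi> X)\<close> by (auto simp: is_mat_def)
  qed
qed

lemma channel_psd: "channel d \<Phi> \<Longrightarrow> psd d X \<Longrightarrow> psd d (\<Phi> X)"
proof -
  assume c: "channel d \<Phi>" and p: "psd d X"
  have "psd (1 * d) X \<longrightarrow> psd (1 * d) (ampl 1 d \<Phi> X)" using c unfolding channel_def by blast
  then have "psd d (ampl 1 d \<Phi> X)" using p by simp
  then show ?thesis using ampl1[OF c] p by (simp add: psd_iff)
qed

lemma tau_diag: "tau j a b = (if a = b \<and> a < j then complex_of_real (1 / real j) else 0)"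
  by (simp add: tau_def)

lemma backward:
  assumes d: "d \<ge> 1" and c: "channel d \<Phi>" and P: "povm d P"
    and F: "\<forall>\<rho>. density d \<rho> \<longrightarrow>
          \<Phi> \<rho> = (\<lambda>a b. \<Sum>j=1..d. mtrace d (mmult d (P j) \<rho>) * tau j a b)"
  shows "activity_breaking d \<Phi>"
  unfolding activity_breaking_def
proof (intro allI impI)
  fix \<rho> assume rd: "density d \<rho>"
  define cj where "cj j = mtrace d (mmult d (P j) \<rho>)" for j
  have cnn: "nn (cj j)" if "j \<in> {1..d}" for j
    using trace_nn[of d "P j" \<rho>] P that rd unfolding povm_def density_def cj_def by auto
  have Fr: "\<Phi> \<rho> = (\<lambda>a b. \<Sum>j=1..d. cj j * tau j a b)" using F rd cj_def by simp
  have rm: "is_mat d \<rho>" using rd by (simp add: density_def psd_iff)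
  have dens: "density d (\<Phi> \<rho>)"
    using channel_psd[OF c] rd c rm unfolding density_def channel_def by auto
  define p where "p i = Re (\<Phi> \<rho> i i)" for i
  have pform: "p i = (\<Sum>j=1..d. Re (cj j) * (if i < j then 1 / real j else 0))" for i
    unfolding p_def Fr using cnn by (auto simp: Re_sum tau_diag nn_def intro!: sum.cong)
  have diag: "\<Phi> \<rho> = (\<lambda>i j. if i = j \<and> i < d then complex_of_real (p i) else 0)"
  proof (intro ext)
    fix a b
    show "\<Phi> \<rho> a b = (if a = b \<and> a < d then complex_of_real (p a) else 0)"
    proof (cases "a = b \<and> a < d")
      case True
      have "Im (\<Phi> \<rho> a a) = 0"
        unfolding Fr using cnn by (auto simp: Im_sum tau_diag nn_def intro!: sum.neutral)
      then show ?thesis using True by (simp add: p_def complex_eq_iff)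
    next
      case False
      have "\<Phi> \<rho> a b = 0" unfolding Fr using False by (auto simp: tau_diag intro!: sum.neutral)
      then show ?thesis using False by auto
    qed
  qed
  have mono: "p j \<le> p i" if "i \<le> j" "j < d" for i j
    unfolding pform
  proof (rule sum_mono)
    fix l assume l: "l \<in> {1..d}"
    have "0 \<le> Re (cj l)" using cnn[OF l] by (simp add: nn_def)
    then show "Re (cj l) * (if j < l then 1 / real l else 0) \<le> Re (cj l) * (if i < l then 1 / real l else 0)"
      using that by auto
  qed
  show "passive_state d (\<Phi> \<rho>)"
    unfolding passive_state_def using dens diag mono by blast
qed

lemma fwd_diag:
  assumes ab: "activity_breaking d \<Phi>" and rd: "density d \<rho>"
  shows "\<exists>p. \<Phi> \<rho> = (\<lambda>i j. if i = j \<and> i < d then complex_of_real (p i) else 0) \<and>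
    (\<forall>i j. i \<le> j \<longrightarrow> j < d \<longrightarrow> p j \<le> p i) \<and> (\<forall>i. i < d \<longrightarrow> 0 \<le> p i)"
proof -
  have ps: "passive_state d (\<Phi> \<rho>)" using ab rd by (simp add: activity_breaking_def)
  then have "\<exists>p :: nat \<Rightarrow> real. \<Phi> \<rho> = (\<lambda>i j. if i = j \<and> i < d then complex_of_real (p i) else 0)
        \<and> (\<forall>i j. i \<le> j \<longrightarrow> j < d \<longrightarrow> p j \<le> p i)" unfolding passive_state_def by (rule conjunct2)
  then obtain p where pf: "\<Phi> \<rho> = (\<lambda>i j. if i = j \<and> i < d then complex_of_real (p i) else 0)"
    and pm: "\<And>i j. i \<le> j \<Longrightarrow> j < d \<Longrightarrow> p j \<le> p i" by auto
  have "psd d (\<Phi> \<rho>)" using ps by (simp add: passive_state_def density_def)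
  then have "0 \<le> p i" if "i < d" for i
  proof -
    have "nn (\<Phi> \<rho> i i)" using diag_nn[of d "\<Phi> \<rho>" i] that \<open>psd d (\<Phi> \<rho>)\<close> by blast
    then show ?thesis using that unfolding pf by (simp add: nn_def)
  qed
  then show ?thesis using pf pm by (intro exI[of _ p] conjI) auto
qed

lemma cc_nn:
  assumes ab: "activity_breaking d \<Phi>" and rd: "density d \<rho>" and j: "j \<in> {1..d}"
  shows "nn (cc \<Phi> j \<rho>)"
proof -
  obtain p where pf: "\<Phi> \<rho> = (\<lambda>i j. if i = j \<and> i < d then complex_of_real (p i) else 0)"
    and pm: "\<And>i j. i \<le> j \<Longrightarrow> j < d \<Longrightarrow> p j \<le> p i" and p0: "\<And>i. i < d \<Longrightarrow> 0 \<le> p i"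
    using fwd_diag[OF ab rd] by blast
  have j1: "j - 1 < d" using j by auto
  show ?thesis
  proof (cases "j < d")
    case True
    have "cc \<Phi> j \<rho> = of_nat j * complex_of_real (p (j - 1) - p j)"
      unfolding cc_def pf using True j1 by simp
    moreover have "p j \<le> p (j - 1)" using pm[of "j - 1" j] True by simp
    ultimately show ?thesis by (simp add: nn_def)
  next
    case False
    then have jd: "j = d" using j by auto
    have "cc \<Phi> j \<rho> = of_nat j * complex_of_real (p (j - 1))"
      unfolding cc_def pf using jd j1 by simp
    then show ?thesis using p0[OF j1] by (simp add: nn_def)
  qed
qed

lemma fwd_formula:
  assumes ab: "activity_breaking d \<Phi>" and rd: "density d \<rho>"
  shows "\<Phi> \<rho> = (\<lambda>a b. \<Sum>j=1..d. cc \<Phi> j \<rho> * tau j a b)"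
proof -
  obtain p where pf: "\<Phi> \<rho> = (\<lambda>i j. if i = j \<and> i < d then complex_of_real (p i) else 0)"
    using fwd_diag[OF ab rd] by blast
  define D where "D i = \<Phi> \<rho> i i" for i
  show ?thesis
  proof (intro ext)
    fix a b
    show "\<Phi> \<rho> a b = (\<Sum>j=1..d. cc \<Phi> j \<rho> * tau j a b)"
    proof (cases "a = b \<and> a < d")
      case True
      have "(\<Sum>j=1..d. cc \<Phi> j \<rho> * tau j a b) = (\<Sum>j=1..d. (D (j - 1) - D j) * (if a < j then 1 else 0))"
      proof (rule sum.cong[OF refl])
        fix j assume j: "j \<in> {1..d}"
        have "complex_of_nat j \<noteq> 0" using j by auto
        then show "cc \<Phi> j \<rho> * tau j a b = (D (j - 1) - D j) * (if a < j then 1 else 0)"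
          using True unfolding cc_def tau_def D_def by (auto simp: field_simps)
      qed
      also have "\<dots> = D a - D d" using True by (intro tel1) simp
      also have "\<dots> = \<Phi> \<rho> a b" using True by (simp add: D_def pf)
      finally show ?thesis by simp
    next
      case False
      then show ?thesis unfolding pf by (auto simp: tau_def intro!: sum.neutral)
    qed
  qed
qed

lemma PP_sum:
  assumes c: "channel d \<Phi>"
  shows "(\<Sum>j=1..d. PP d \<Phi> j a b) = idm d a b"
proof (cases "a < d \<and> b < d")
  case True
  define D where "D i = \<Phi> (emat b a) i i" for i
  have m: "is_mat d (emat b a)" using True emat_mat by simp
  have e1: "(\<Sum>j=1..d. PP d \<Phi> j a b) = (\<Sum>j=1..d. of_nat j * (D (j - 1) - D j))"
    using True by (simp add: PP_def cc_def D_def)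
  have e2: "(\<Sum>j=1..d. of_nat j * (D (j - 1) - D j)) = (\<Sum>i<d. D i) - of_nat d * D d" by (rule tel2)
  have "is_mat d (\<Phi> (emat b a))" using c m by (simp add: channel_def)
  then have e3: "D d = 0" by (simp add: is_mat_def D_def)
  have "mtrace d (\<Phi> (emat b a)) = mtrace d (emat b a)" using c m by (simp add: channel_def)
  then have e4: "(\<Sum>i<d. D i) = mtrace d (emat b a)" by (simp add: mtrace_def D_def)
  have e5: "mtrace d (emat b a) = idm d a b"
  proof (cases "a = b")
    case True
    then show ?thesis using \<open>a < d \<and> b < d\<close> by (simp add: mtrace_def emat_def idm_def)
  next
    case False
    then have "(\<Sum>i<d. if i = b \<and> i = a then 1 else 0) = (0::complex)" by (intro sum.neutral) auto
    then show ?thesis using False by (simp add: mtrace_def emat_def idm_def)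
  qed
  show ?thesis unfolding e1 e2 e3 e4 e5 by simp
next
  case False
  then show ?thesis by (auto simp: PP_def idm_def)
qed



lemma nn_scale: "nn z \<Longrightarrow> 0 \<le> s \<Longrightarrow> nn (complex_of_real s * z)"
  by (simp add: nn_def)

lemma PP_psd:
  assumes c: "channel d \<Phi>" and ab: "activity_breaking d \<Phi>" and j: "j \<in> {1..d}"
  shows "psd d (PP d \<Phi> j)"
  unfolding psd_iff
proof (intro conjI allI)
  show "is_mat d (PP d \<Phi> j)" by (simp add: is_mat_def PP_def)
  fix v :: "nat \<Rightarrow> complex"
  define M where "M = (\<lambda>x y. if x < d \<and> y < d then v x * cnj (v y) else 0)"
  have Mm: "is_mat d M" by (simp add: M_def is_mat_def)
  have qM: "qf d (PP d \<Phi> j) v = cc \<Phi> j M"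
    unfolding cc_lin[OF c Mm] qf_def
    by (intro sum.cong refl) (simp add: PP_def M_def algebra_simps)
  define s where "s = (\<Sum>i<d. (cmod (v i))^2)"
  have s0: "0 \<le> s" unfolding s_def by (intro sum_nonneg) simp
  show "nn (qf d (PP d \<Phi> j) v)"
  proof (cases "s = 0")
    case True
    then have "\<forall>i\<in>{..<d}. (cmod (v i))^2 = 0" unfolding s_def
      by (subst sum_nonneg_eq_0_iff[symmetric]) auto
    then have "\<forall>i<d. v i = 0" by simp
    then have "qf d (PP d \<Phi> j) v = 0" unfolding qf_def by simp
    then show ?thesis by (simp add: nn_def)
  next
    case False
    then have spos: "s > 0" using s0 by simp
    define R where "R = (\<lambda>x y. M x y / complex_of_real s)"
    have Rm: "is_mat d R" using Mm by (simp add: R_def is_mat_def)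
    have qR: "nn (qf d R w)" for w
    proof -
      define z where "z = (\<Sum>x<d. cnj (w x) * v x)"
      have "qf d R w = (\<Sum>x<d. \<Sum>y<d. (cnj (w x) * v x) * (w y * cnj (v y))) / complex_of_real s"
        unfolding qf_def R_def M_def sum_divide_distrib by (intro sum.cong refl) (simp add: mult_ac)
      also have "\<dots> = z * cnj z / complex_of_real s"
        unfolding z_def by (simp add: sum_product cnj_sum mult.commute)
      also have "\<dots> = complex_of_real ((cmod z)^2 / s)"
        using complex_norm_square[of z] by simp
      finally show ?thesis using spos by (simp add: nn_def)
    qed
    have Rt: "mtrace d R = 1"
    proof -
      have "mtrace d R = (\<Sum>x<d. complex_of_real ((cmod (v x))^2)) / complex_of_real s"
        unfolding mtrace_def R_def M_def sum_divide_distrib complex_norm_square by simp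
      also have "(\<Sum>x<d. complex_of_real ((cmod (v x))^2)) = complex_of_real s"
        unfolding s_def of_real_sum ..
      also have "complex_of_real s / complex_of_real s = 1" using spos by simp
      finally show ?thesis .
    qed
    have Rd: "density d R" unfolding density_def psd_iff using Rm qR Rt by simp
    have "cc \<Phi> j M = complex_of_real s * cc \<Phi> j R"
      unfolding cc_lin[OF c Mm] cc_lin[OF c Rm] unfolding R_def using spos
      by (simp add: sum_distrib_left)
    then show ?thesis using qM nn_scale[OF cc_nn[OF ab Rd j] s0] by simp
  qed
qed


theorem mainTheorem5:
  fixes d :: nat and \<Phi> :: "cmat \<Rightarrow> cmat"
  assumes "d \<ge> 1" and "channel d \<Phi>"
  shows "activity_breaking d \<Phi> \<longleftrightarrow>
    (\<exists>P. povm d P \<and>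
       (\<forall>\<rho>. density d \<rho> \<longrightarrow>
          \<Phi> \<rho> = (\<lambda>a b. \<Sum>j=1..d. mtrace d (mmult d (P j) \<rho>) * tau j a b)))"
proof
  assume ab: "activity_breaking d \<Phi>"
  have c: "channel d \<Phi>" by (rule assms(2))
  show "\<exists>P. povm d P \<and>
       (\<forall>\<rho>. density d \<rho> \<longrightarrow>
          \<Phi> \<rho> = (\<lambda>a b. \<Sum>j=1..d. mtrace d (mmult d (P j) \<rho>) * tau j a b))"
  proof (intro exI[of _ "PP d \<Phi>"] conjI allI impI)
    show "povm d (PP d \<Phi>)" unfolding povm_def using PP_psd[OF c ab] PP_sum[OF c] by auto
    fix \<rho> assume rd: "density d \<rho>"
    have rm: "is_mat d \<rho>" using rd by (simp add: density_def psd_iff)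
    show "\<Phi> \<rho> = (\<lambda>a b. \<Sum>j=1..d. mtrace d (mmult d (PP d \<Phi> j) \<rho>) * tau j a b)"
      unfolding mtrace_PP[OF c rm] by (rule fwd_formula[OF ab rd])
  qed
next
  assume "\<exists>P. povm d P \<and>
       (\<forall>\<rho>. density d \<rho> \<longrightarrow>
          \<Phi> \<rho> = (\<lambda>a b. \<Sum>j=1..d. mtrace d (mmult d (P j) \<rho>) * tau j a b))"
  then obtain P where P: "povm d P" and F: "\<forall>\<rho>. density d \<rho> \<longrightarrow>
          \<Phi> \<rho> = (\<lambda>a b. \<Sum>j=1..d. mtrace d (mmult d (P j) \<rho>) * tau j a b)" by blast
  show "activity_breaking d \<Phi>" by (rule backward[OF assms P F])
qed

end
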